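(* There exist a single-item, 2-bidder interdependent-values setting whose valuation profile is $c$-single-crossing for some constant $c\ge1$, and a signal profile $\mathbf s$, such that every auction that allocates the item to a highest-valued bidder and charges the winner $w$ at most $v_w(\mathbf b)$ (her value evaluated at the reported bid profile $\mathbf b$) admits no pure Nash equilibrium at $\mathbf s$ under the no-overbidding assumption.
   Context: Single-item interdependent-values setting: bidders $i\in\{1,\dots,n\}$ have private signals $s_i\in S_i\subseteq\mathbb R_{\ge0}$ (here $S_i$ are intervals); valuations $v_i:S_1\times\dots\times S_n\to\mathbb R_{\ge0}$ are publicly known, weakly increasing in every coordinate and strictly increasing in $s_i$. The profile is $c$-single-crossing ($c\ge1$) if for all bidders $i,i'$, all $\mathbf s$ and all $\delta\ge0$, $c\,(v_i(s_i+\delta,\mathbf s_{-i})-v_i(\mathbf s))\ge v_{i'}(s_i+\delta,\mathbf s_{-i})-v_{i'}(\mathbf s)$. An auction solicits bids (reported signals) $b_i\in S_i$, allocates the item to some bidder in $\arg\max_j v_j(\mathbf b)$ (ties arbitrary), charges the winner $w$ a payment $p_w(\mathbf b)$, and losing bidders pay nothing. Utility: $u_i(\mathbf b;\mathbf s)=x_i(\mathbf b)v_i(\mathbf s)-p_i(\mathbf b)$. A pure Nash equilibrium at $\mathbf s$ under no-overbidding is a bid profile $\mathbf b$ with $b_i\le s_i$ for all $i$ such that no bidder $i$ has a bid $b_i'\in S_i$ with $b_i'\le s_i$ and $u_i((b_i',\mathbf b_{-i});\mathbf s)>u_i(\mathbf b;\mathbf s)$. *)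

theory Defs
  imports "HOL-Analysis.Analysis" "HOL-Library.FuncSet"
begin

text \<open>Bidders are 0..n-1. A (signal or bid) profile is an extensional function in
  PiE {..<n} S, where S i is the signal space of bidder i.\<close>

definition profiles :: "nat \<Rightarrow> (nat \<Rightarrow> real set) \<Rightarrow> (nat \<Rightarrow> real) set" where
  "profiles n S = PiE {..<n} S"

definition valid_setting :: "nat \<Rightarrow> (nat \<Rightarrow> real set) \<Rightarrow> (nat \<Rightarrow> (nat \<Rightarrow> real) \<Rightarrow> real) \<Rightarrow> bool" where
  "valid_setting n S v \<longleftrightarrow>
     (\<forall>i<n. is_interval (S i) \<and> S i \<noteq> {} \<and> S i \<subseteq> {0..}) \<and>
     (\<forall>i<n. \<forall>s\<in>profiles n S. v i s \<ge> 0) \<and>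
     (\<forall>i<n. \<forall>j<n. \<forall>s\<in>profiles n S. \<forall>\<delta>\<ge>0. s j + \<delta> \<in> S j \<longrightarrow>
         v i s \<le> v i (s(j := s j + \<delta>))) \<and>
     (\<forall>i<n. \<forall>s\<in>profiles n S. \<forall>\<delta>>0. s i + \<delta> \<in> S i \<longrightarrow>
         v i s < v i (s(i := s i + \<delta>)))"

definition single_crossing :: "nat \<Rightarrow> (nat \<Rightarrow> real set) \<Rightarrow> (nat \<Rightarrow> (nat \<Rightarrow> real) \<Rightarrow> real) \<Rightarrow> real \<Rightarrow> bool" where
  "single_crossing n S v c \<longleftrightarrow>
     (\<forall>i<n. \<forall>i'<n. \<forall>s\<in>profiles n S. \<forall>\<delta>\<ge>0. s i + \<delta> \<in> S i \<longrightarrow>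
        c * (v i (s(i := s i + \<delta>)) - v i s) \<ge> v i' (s(i := s i + \<delta>)) - v i' s)"

text \<open>An auction: winner function w (deterministic; ties broken arbitrarily) and the
  winner's payment p. It allocates to a highest-valued bidder (values at the bids) and
  charges the winner at most her value at the bid profile. Losers pay nothing.\<close>

definition highest_value_auction :: "nat \<Rightarrow> (nat \<Rightarrow> real set) \<Rightarrow> (nat \<Rightarrow> (nat \<Rightarrow> real) \<Rightarrow> real)
     \<Rightarrow> ((nat \<Rightarrow> real) \<Rightarrow> nat) \<Rightarrow> ((nat \<Rightarrow> real) \<Rightarrow> real) \<Rightarrow> bool" where
  "highest_value_auction n S v w p \<longleftrightarrow>
     (\<forall>b\<in>profiles n S. w b < n \<and> (\<forall>j<n. v j b \<le> v (w b) b) \<and> p b \<le> v (w b) b)"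

definition utility :: "(nat \<Rightarrow> (nat \<Rightarrow> real) \<Rightarrow> real) \<Rightarrow> ((nat \<Rightarrow> real) \<Rightarrow> nat) \<Rightarrow> ((nat \<Rightarrow> real) \<Rightarrow> real)
     \<Rightarrow> nat \<Rightarrow> (nat \<Rightarrow> real) \<Rightarrow> (nat \<Rightarrow> real) \<Rightarrow> real" where
  "utility v w p i b s = (if w b = i then v i s - p b else 0)"

definition pure_NE_no_overbid :: "nat \<Rightarrow> (nat \<Rightarrow> real set) \<Rightarrow> (nat \<Rightarrow> (nat \<Rightarrow> real) \<Rightarrow> real)
     \<Rightarrow> ((nat \<Rightarrow> real) \<Rightarrow> nat) \<Rightarrow> ((nat \<Rightarrow> real) \<Rightarrow> real) \<Rightarrow> (nat \<Rightarrow> real) \<Rightarrow> (nat \<Rightarrow> real) \<Rightarrow> bool" where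
  "pure_NE_no_overbid n S v w p s b \<longleftrightarrow>
     b \<in> profiles n S \<and> (\<forall>i<n. b i \<le> s i) \<and>
     (\<forall>i<n. \<forall>b'\<in>S i. b' \<le> s i \<longrightarrow> \<not> (utility v w p i (b(i := b')) s > utility v w p i b s))"

end

theory Submission
  imports Defs
begin

definition SS :: "nat \<Rightarrow> real set" where "SS i = {0..1}"
definition VV :: "nat \<Rightarrow> (nat \<Rightarrow> real) \<Rightarrow> real" where
  "VV i x = (if i = 0 then 9 * (x 0 + x 1) * (6 - (x 0 + x 1)) else 36 * (x 0 + x 1) + 8)"
definition sig :: "nat \<Rightarrow> real" where "sig i = (if i < 2 then 1 else undefined)"

lemma fdiff: "9 * (x + d) * (6 - (x + d)) - 9 * x * (6 - x) = 9 * d * (6 - 2 * x - d)" for x d :: real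
  by (simp add: algebra_simps)

lemma fbounds: fixes x d :: real assumes "0 \<le> x" "0 \<le> d" "x + d \<le> 2"
  shows "9 * d * (6 - 2 * x - d) \<ge> 18 * d" "9 * d * (6 - 2 * x - d) \<le> 54 * d"
proof -
  have "6 - 2 * x - d \<ge> 2" "6 - 2 * x - d \<le> 6" using assms by auto
  then show "9 * d * (6 - 2 * x - d) \<ge> 18 * d" "9 * d * (6 - 2 * x - d) \<le> 54 * d"
    using mult_left_mono[of 2 "6 - 2 * x - d" "9*d"] mult_left_mono[of "6 - 2 * x - d" 6 "9*d"] assms
    by (auto simp: algebra_simps)
qed

lemma two_cases: "i < (2::nat) \<Longrightarrow> i = 0 \<or> i = 1" by auto

lemma prof_mem: "s \<in> profiles 2 SS \<Longrightarrow> s 0 \<in> {0..1} \<and> s 1 \<in> {0..1}"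
  unfolding profiles_def SS_def by (auto simp: PiE_iff)

lemma prof_upd: "s \<in> profiles 2 SS \<Longrightarrow> j < 2 \<Longrightarrow> y \<in> {0..1} \<Longrightarrow> s(j := y) \<in> profiles 2 SS"
  unfolding profiles_def SS_def
  by (metis PiE_fun_upd insert_absorb lessThan_iff)

lemma sig_prof: "sig \<in> profiles 2 SS"
  unfolding profiles_def SS_def sig_def by (auto simp: PiE_iff extensional_def)

lemma valid: "valid_setting 2 SS VV"
  unfolding valid_setting_def
proof (intro conjI allI impI ballI)
  fix i :: nat assume "i < 2"
  show "is_interval (SS i)" "SS i \<noteq> {}" "SS i \<subseteq> {0..}" by (auto simp: SS_def is_interval_cc)
next
  fix i :: nat and s assume "i < 2" "s \<in> profiles 2 SS"
  then have "s 0 \<in> {0..1}" "s 1 \<in> {0..1}" using prof_mem by auto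
  then show "VV i s \<ge> 0" unfolding VV_def by (auto intro!: mult_nonneg_nonneg)
next
  fix i j :: nat and s and \<delta> :: real
  assume h: "i < 2" "j < 2" "s \<in> profiles 2 SS" "\<delta> \<ge> 0" "s j + \<delta> \<in> SS j"
  then have a: "s 0 \<in> {0..1}" "s 1 \<in> {0..1}" using prof_mem by auto
  have b: "s j + \<delta> \<le> 1" using h(5) by (simp add: SS_def)
  let ?x = "s 0 + s 1"
  have "(s(j := s j + \<delta>)) 0 + (s(j := s j + \<delta>)) 1 = ?x + \<delta>"
    using two_cases[OF h(2)] by auto
  moreover have "?x + \<delta> \<le> 2" using two_cases[OF h(2)] a b by auto
  moreover have "VV 0 s \<le> VV 0 (s(j := s j + \<delta>))"
  proof -
    have q1: "VV 0 (s(j := s j + \<delta>)) = 9*(?x+\<delta>)*(6-(?x+\<delta>))" using calculation(1) by (simp add: VV_def)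
    have q2: "VV 0 s = 9*?x*(6-?x)" by (simp add: VV_def)
    have "?x \<ge> 0" using a by auto
    then show ?thesis using q1 q2 fdiff[of ?x \<delta>] fbounds(1)[of ?x \<delta>] calculation(2) h(4) by linarith
  qed
  moreover have "VV 1 s \<le> VV 1 (s(j := s j + \<delta>))"
  proof -
    have q1: "VV 1 (s(j := s j + \<delta>)) = 36*(?x+\<delta>)+8" using calculation(1) by (simp add: VV_def)
    have q2: "VV 1 s = 36*?x+8" by (simp add: VV_def)
    show ?thesis unfolding q1 q2 using h(4) by simp
  qed
  ultimately show "VV i s \<le> VV i (s(j := s j + \<delta>))"
    using two_cases[OF h(1)] by auto
next
  fix i :: nat and s and \<delta> :: real
  assume h: "i < 2" "s \<in> profiles 2 SS" "\<delta> > 0" "s i + \<delta> \<in> SS i"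
  then have a: "s 0 \<in> {0..1}" "s 1 \<in> {0..1}" using prof_mem by auto
  have b: "s i + \<delta> \<le> 1" using h(4) by (simp add: SS_def)
  let ?x = "s 0 + s 1"
  have "(s(i := s i + \<delta>)) 0 + (s(i := s i + \<delta>)) 1 = ?x + \<delta>"
    using two_cases[OF h(1)] by auto
  moreover have "?x + \<delta> \<le> 2" using two_cases[OF h(1)] a b by auto
  moreover have "VV 0 s < VV 0 (s(i := s i + \<delta>))"
  proof -
    have q1: "VV 0 (s(i := s i + \<delta>)) = 9*(?x+\<delta>)*(6-(?x+\<delta>))" using calculation(1) by (simp add: VV_def)
    have q2: "VV 0 s = 9*?x*(6-?x)" by (simp add: VV_def)
    have "?x \<ge> 0" using a by auto
    then show ?thesis using q1 q2 fdiff[of ?x \<delta>] fbounds(1)[of ?x \<delta>] calculation(2) h(3) by linarith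
  qed
  moreover have "VV 1 s < VV 1 (s(i := s i + \<delta>))"
  proof -
    have q1: "VV 1 (s(i := s i + \<delta>)) = 36*(?x+\<delta>)+8" using calculation(1) by (simp add: VV_def)
    have q2: "VV 1 s = 36*?x+8" by (simp add: VV_def)
    show ?thesis unfolding q1 q2 using h(3) by simp
  qed
  ultimately show "VV i s < VV i (s(i := s i + \<delta>))"
    using two_cases[OF h(1)] by auto
qed

lemma sc: "single_crossing 2 SS VV 2"
  unfolding single_crossing_def
proof (intro allI impI ballI)
  fix i i' :: nat and s and \<delta> :: real
  assume h: "i < 2" "i' < 2" "s \<in> profiles 2 SS" "\<delta> \<ge> 0" "s i + \<delta> \<in> SS i"
  then have a: "s 0 \<in> {0..1}" "s 1 \<in> {0..1}" using prof_mem by auto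
  have b: "s i + \<delta> \<le> 1" using h(5) by (simp add: SS_def)
  let ?x = "s 0 + s 1"
  have e: "(s(i := s i + \<delta>)) 0 + (s(i := s i + \<delta>)) 1 = ?x + \<delta>"
    using two_cases[OF h(1)] by auto
  have le: "?x + \<delta> \<le> 2" using two_cases[OF h(1)] a b by auto
  have dA: "9 * (?x + \<delta>) * (6 - (?x + \<delta>)) - 9 * ?x * (6 - ?x) = 9 * \<delta> * (6 - 2 * ?x - \<delta>)"
    by (simp add: algebra_simps)
  have x0: "?x \<ge> 0" using a by auto
  have r1: "9 * \<delta> * (6 - 2 * ?x - \<delta>) \<ge> 18 * \<delta>" using le x0 h(4) fbounds(1)[of ?x \<delta>]
    by linarith
  have r2: "9 * \<delta> * (6 - 2 * ?x - \<delta>) \<le> 54 * \<delta>" using le x0 h(4) fbounds(2)[of ?x \<delta>]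
    by linarith
  show "2 * (VV i (s(i := s i + \<delta>)) - VV i s) \<ge> VV i' (s(i := s i + \<delta>)) - VV i' s"
    using two_cases[OF h(1)] two_cases[OF h(2)] r1 r2 h(4)
    unfolding VV_def e dA by (auto simp: algebra_simps dA)
qed

theorem mainTheorem3:
  shows "\<exists>(S :: nat \<Rightarrow> real set) (v :: nat \<Rightarrow> (nat \<Rightarrow> real) \<Rightarrow> real) (c :: real) (s :: nat \<Rightarrow> real).
           valid_setting 2 S v \<and> c \<ge> 1 \<and> single_crossing 2 S v c \<and> s \<in> profiles 2 S \<and>
           (\<forall>w p. highest_value_auction 2 S v w p \<longrightarrow> \<not> (\<exists>b. pure_NE_no_overbid 2 S v w p s b))"
proof (intro exI conjI allI impI notI)
  show "valid_setting 2 SS VV" by (rule valid)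
  show "(1::real) \<le> 2" by simp
  show "single_crossing 2 SS VV 2" by (rule sc)
  show "sig \<in> profiles 2 SS" by (rule sig_prof)
  fix w p assume H: "highest_value_auction 2 SS VV w p"
    and "\<exists>b. pure_NE_no_overbid 2 SS VV w p sig b"
  then obtain b where NE: "pure_NE_no_overbid 2 SS VV w p sig b" by blast
  have bp: "b \<in> profiles 2 SS" and dev: "\<And>i b'. i < 2 \<Longrightarrow> b' \<in> SS i \<Longrightarrow> b' \<le> sig i \<Longrightarrow>
      \<not> utility VV w p i (b(i := b')) sig > utility VV w p i b sig"
    using NE unfolding pure_NE_no_overbid_def by auto
  have a: "b 0 \<in> {0..1}" "b 1 \<in> {0..1}" using prof_mem[OF bp] by auto
  have Hb: "\<And>b. b \<in> profiles 2 SS \<Longrightarrow> w b < 2 \<and> (\<forall>j<2. VV j b \<le> VV (w b) b) \<and> p b \<le> VV (w b) b"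
    using H unfolding highest_value_auction_def by blast
  have vs0: "VV 0 sig = 72" and vs1: "VV 1 sig = 80" by (simp_all add: VV_def sig_def)
  have "w b < 2" using Hb[OF bp] by blast
  then consider "w b = 0" | "w b = 1" by linarith
  then show False
  proof cases
    case 1
    define y :: real where "y = (if b 0 < 2/3 then 0 else 5/6)"
    have y: "y \<in> {0..1}" by (simp add: y_def)
    define b2 where "b2 = b(1 := y)"
    have b2p: "b2 \<in> profiles 2 SS" unfolding b2_def using prof_upd[OF bp _ y] by simp
    have x2: "b2 0 + b2 1 = b 0 + y" by (simp add: b2_def)
    have neg: "(3 * (b 0 + y) - 2) * (4 - 3 * (b 0 + y)) < 0"
      using a by (auto simp: y_def intro: mult_neg_pos mult_pos_neg)
    have lt: "VV 0 b2 < VV 1 b2" unfolding VV_def x2 using neg by (simp add: algebra_simps)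
    have "w b2 < 2" "VV 1 b2 \<le> VV (w b2) b2" "p b2 \<le> VV (w b2) b2" using Hb[OF b2p] by auto
    then have w2: "w b2 = 1" using lt by (metis less_le_not_le two_cases)
    have "VV 1 b2 = 36 * (b 0 + y) + 8" by (simp add: VV_def b2_def)
    then have "p b2 \<le> 36 * (b 0 + y) + 8" using Hb[OF b2p] w2 by metis
    moreover have "b 0 + y < 2" using a by (auto simp: y_def)
    ultimately have "utility VV w p 1 b2 sig > utility VV w p 1 b sig"
      using 1 w2 vs1 by (simp add: utility_def)
    moreover have "y \<le> sig 1" by (simp add: y_def sig_def)
    ultimately show False using dev[of 1 y] y by (simp add: b2_def SS_def)
  next
    case 2
    define y :: real where "y = 3/4 - b 1 / 2"
    have y: "y \<in> {0..1}" using a by (simp add: y_def)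
    define b2 where "b2 = b(0 := y)"
    have b2p: "b2 \<in> profiles 2 SS" unfolding b2_def using prof_upd[OF bp _ y] by simp
    have x2: "b2 0 + b2 1 = y + b 1" by (simp add: b2_def)
    have pos: "(3 * (y + b 1) - 2) * (4 - 3 * (y + b 1)) > 0"
      using a by (auto simp: y_def intro: mult_pos_pos)
    have lt: "VV 1 b2 < VV 0 b2" unfolding VV_def x2 using pos by (simp add: algebra_simps)
    have "w b2 < 2" "VV 0 b2 \<le> VV (w b2) b2" "p b2 \<le> VV (w b2) b2" using Hb[OF b2p] by auto
    then have w2: "w b2 = 0" using lt by (metis less_le_not_le two_cases)
    have "VV 0 b2 = 9 * (y + b 1) * (6 - (y + b 1))" by (simp add: VV_def b2_def)
    then have "p b2 \<le> 9 * (y + b 1) * (6 - (y + b 1))" using Hb[OF b2p] w2 by metis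
    moreover have "y + b 1 \<le> 5/4" "y + b 1 \<ge> 0" using a by (auto simp: y_def)
    moreover have "9 * (y + b 1) * (6 - (y + b 1)) < 72" using calculation(2,3) fdiff[of "y + b 1" "2 - (y + b 1)"] fbounds[of "y + b 1" "2 - (y + b 1)"] by simp
    ultimately have "utility VV w p 0 b2 sig > utility VV w p 0 b sig"
      using 2 w2 vs0 by (simp add: utility_def)
    moreover have "y \<le> sig 0" using a by (simp add: y_def sig_def)
    ultimately show False using dev[of 0 y] y by (simp add: b2_def SS_def)
  qed
qed

end
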